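(* Let $\Gamma_1:[0,1]\to\mathbb{R}^{1\times n}$ be the solution of $\Gamma_1''(x)=\varepsilon_1^{-1}\Gamma_1(x)A$, $\Gamma_1(0)=\Gamma_0$, $\Gamma_1'(0)=0$. The first-order hyperbolic system on $\mathcal{T}$ \begin{align*} \sqrt{\varepsilon_1}\partial_xk_{11}+\sqrt{\varepsilon_1}\partial_yk_{11}&=\check k_{11}, & \sqrt{\varepsilon_1}\partial_xk_{12}+\sqrt{\varepsilon_2}\partial_yk_{12}&=\check k_{12},\\ \sqrt{\varepsilon_1}\partial_x\check k_{11}-\sqrt{\varepsilon_1}\partial_y\check k_{11}&=0, & \sqrt{\varepsilon_1}\partial_x\check k_{12}-\sqrt{\varepsilon_2}\partial_y\check k_{12}&=0, \end{align*} with boundary conditions \begin{align*} k_{11}(x,0)&=\frac{a\varepsilon_2}{\varepsilon_1(a\varepsilon_2+\sqrt{\varepsilon_1\varepsilon_2})}\int_0^x\big[\sqrt{\varepsilon_1}\check k_{11}(y,0)+\sqrt{\varepsilon_2}\check k_{12}(y,0)-\Gamma_1(y)B\big]dy,\\ k_{12}(x,0)&=\frac{1}{a\varepsilon_2+\sqrt{\varepsilon_1\varepsilon_2}}\int_0^x\big[\sqrt{\varepsilon_1}\check k_{11}(y,0)+\sqrt{\varepsilon_2}\check k_{12}(y,0)-\Gamma_1(y)B\big]dy,\\ k_{12}(x,x)&=0,\qquad \check k_{11}(x,x)=0,\qquad \check k_{12}(x,x)=0, \end{align*} admits a unique solution (in the sense of integration along characteristics) with $k_{11},k_{12},\check k_{11},\check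 k_{12}\in C(\mathcal{T})$.
   Context: Fix $\varepsilon>0$, $y_0\in(-1,0)$; $\varepsilon_1=\varepsilon/(1+y_0)^2$, $\varepsilon_2=\varepsilon/(1-y_0)^2$ (so $\varepsilon_1>\varepsilon_2>0$), $a=(1+y_0)/(1-y_0)\in(0,1)$. $A\in\mathbb{R}^{n\times n}$, $B\in\mathbb{R}^{n\times1}$, $\Gamma_0\in\mathbb{R}^{1\times n}$. $\mathcal{T}=\{(x,y):0\le y\le x\le1\}$. *)

theory Defs
  imports "HOL-Analysis.Analysis"
begin

definition eps1 :: "real \<Rightarrow> real \<Rightarrow> real" where
  "eps1 \<epsilon> y0 = \<epsilon> / (1 + y0)^2"

definition eps2 :: "real \<Rightarrow> real \<Rightarrow> real" where
  "eps2 \<epsilon> y0 = \<epsilon> / (1 - y0)^2"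

definition aa :: "real \<Rightarrow> real" where
  "aa y0 = (1 + y0) / (1 - y0)"

definition Tri :: "(real \<times> real) set" where
  "Tri = {(x, y). 0 \<le> y \<and> y \<le> x \<and> x \<le> 1}"

text \<open>k solves  l1 * k_x + l2 * k_y = f  on Tri in the sense of integration along
  characteristics: along every characteristic segment (x,y) + s(l1,l2), 0 <= s <= t,
  lying in Tri (Tri is convex, so it suffices that both endpoints lie in Tri),
  the increment of k equals the integral of f.\<close>
definition char_sol :: "real \<Rightarrow> real \<Rightarrow> (real \<times> real \<Rightarrow> real) \<Rightarrow> (real \<times> real \<Rightarrow> real) \<Rightarrow> bool" where
  "char_sol l1 l2 k f \<longleftrightarrow>
     (\<forall>x y t. (x, y) \<in> Tri \<and> 0 \<le> t \<and> (x + t * l1, y + t * l2) \<in> Tri \<longrightarrow>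
        k (x + t * l1, y + t * l2) - k (x, y) = integral {0..t} (\<lambda>s. f (x + s * l1, y + s * l2)))"

end

theory Submission
  imports Defs
begin

lemma lin_seg:
  fixes A B s t :: real
  assumes "0 \<le> A" "0 \<le> A + t*B" "0 \<le> s" "s \<le> t"
  shows "0 \<le> A + s*B"
proof (cases "B \<ge> 0")
  case True thus ?thesis using assms by simp
next
  case False
  hence "t*B \<le> s*B" using assms by (intro mult_right_mono_neg) auto
  thus ?thesis using assms by linarith
qed

lemma seg_in_Tri:
  assumes "(x,y) \<in> Tri" "(x + t*l1, y + t*l2) \<in> Tri" "0 \<le> s" "s \<le> t"
  shows "(x + s*l1, y + s*l2) \<in> Tri"
proof -
  have h: "0 \<le> y" "0 \<le> x - y" "0 \<le> 1 - x" "0 \<le> y + t*l2"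
     "0 \<le> (x - y) + t*(l1 - l2)" "0 \<le> (1 - x) + t*(- l1)"
    using assms(1,2) by (auto simp: Tri_def algebra_simps)
  have "0 \<le> y + s*l2" by (rule lin_seg[OF h(1) h(4) assms(3,4)])
  moreover have "0 \<le> (x - y) + s*(l1 - l2)" by (rule lin_seg[OF h(2) h(5) assms(3,4)])
  moreover have "0 \<le> (1 - x) + s*(- l1)" by (rule lin_seg[OF h(3) h(6) assms(3,4)])
  ultimately show ?thesis by (auto simp: Tri_def algebra_simps)
qed

lemma char_use0:
  assumes "char_sol l1 l2 k f" "\<forall>p\<in>Tri. f p = 0"
    "(x,y) \<in> Tri" "0 \<le> t" "x' = x + t*l1" "y' = y + t*l2" "(x',y') \<in> Tri"
  shows "k (x',y') = k (x,y)"
proof -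
  have "k (x',y') - k (x,y) = integral {0..t} (\<lambda>s. f (x + s*l1, y + s*l2))"
    using assms(1,3-7) unfolding char_sol_def by blast
  also have "\<dots> = integral {0..t} (\<lambda>s. 0)"
  proof (rule integral_cong)
    fix s assume "s \<in> {0..t}"
    hence "(x + s*l1, y + s*l2) \<in> Tri" using seg_in_Tri[of x y t l1 l2 s] assms(3,5,6,7) by auto
    thus "f (x + s*l1, y + s*l2) = 0" using assms(2) by blast
  qed
  finally show ?thesis by simp
qed

lemma core:
  fixes r1 r2 a C1 C2 :: real and g :: "real \<Rightarrow> real"
  assumes r2: "0 < r2" "r2 < r1" and a: "a = r2 / r1" and g: "continuous_on {0..1} g"
  shows "\<exists>!K. case K of (k11, k12, c11, c12) \<Rightarrow>
     (\<forall>p. p \<notin> Tri \<longrightarrow> k11 p = 0 \<and> k12 p = 0 \<and> c11 p = 0 \<and> c12 p = 0)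
   \<and> continuous_on Tri k11 \<and> continuous_on Tri k12
   \<and> continuous_on Tri c11 \<and> continuous_on Tri c12
   \<and> char_sol r1 r1 k11 c11 \<and> char_sol r1 r2 k12 c12
   \<and> char_sol r1 (- r1) c11 (\<lambda>_. 0) \<and> char_sol r1 (- r2) c12 (\<lambda>_. 0)
   \<and> (\<forall>x\<in>{0..1}.
        k11 (x, 0) = C1 * integral {0..x} (\<lambda>y. r1 * c11 (y, 0) + r2 * c12 (y, 0) - g y)
      \<and> k12 (x, 0) = C2 * integral {0..x} (\<lambda>y. r1 * c11 (y, 0) + r2 * c12 (y, 0) - g y)
      \<and> k12 (x, x) = 0 \<and> c11 (x, x) = 0 \<and> c12 (x, x) = 0)"
   (is "\<exists>!K. ?P K")
proof -
  have r1: "0 < r1" using r2 by linarith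
  have apos: "0 < a" using r1 r2 a by simp
  have alt1: "a < 1" using r1 r2 a by simp
  have ra: "r2 / a = r1" using a r1 r2 apos by (simp add: field_simps)
  define H where "H x = integral {0..x} (\<lambda>y. - g y)" for x
  have H0: "H 0 = 0" by (simp add: H_def)
  have Hc: "continuous_on {0..1} H"
    unfolding H_def
    by (rule indefinite_integral_continuous_1, rule integrable_continuous_interval,
        intro continuous_intros g)
  have Fcong: "integral {0..x} (\<lambda>y. r1 * c11 (y, 0) + r2 * c12 (y, 0) - g y) = H x"
    if "\<forall>p\<in>Tri. c11 p = 0" "\<forall>p\<in>Tri. c12 p = 0" "x \<in> {0..1}" for c11 c12 :: "real \<times> real \<Rightarrow> real" and x
    unfolding H_def
    by (rule integral_cong) (use that in \<open>auto simp: Tri_def\<close>)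
  define k11 where "k11 p = (if p \<in> Tri then C1 * H (fst p - snd p) else 0)" for p
  define k12 where "k12 p = (if p \<in> Tri then C2 * H (max 0 (fst p - snd p / a)) else 0)" for p
  define c :: "real \<times> real \<Rightarrow> real" where "c p = 0" for p
  have TriD: "0 \<le> y" "y \<le> x" "x \<le> 1" if "(x,y) \<in> Tri" for x y using that by (auto simp: Tri_def)
  have ex: "?P (k11, k12, c, c)"
  proof -
    have "continuous_on Tri k11"
    proof -
      have "continuous_on Tri (\<lambda>p. C1 * H (fst p - snd p))"
        apply (intro continuous_intros)
        apply (rule continuous_on_compose2[OF Hc])
          apply (intro continuous_intros)
        by (auto simp: Tri_def)
      thus ?thesis by (rule continuous_on_eq) (auto simp: k11_def)
    qed
    moreover have "continuous_on Tri k12"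
    proof -
      have "continuous_on Tri (\<lambda>p. C2 * H (max 0 (fst p - snd p / a)))"
        apply (intro continuous_intros)
        apply (rule continuous_on_compose2[OF Hc])
          apply (intro continuous_intros)
        using apos by (auto simp: Tri_def) (smt (verit) divide_nonneg_pos)
      thus ?thesis by (rule continuous_on_eq) (auto simp: k12_def)
    qed
    moreover have "char_sol r1 r1 k11 c"
      unfolding char_sol_def k11_def c_def by auto
    moreover have "char_sol r1 r2 k12 c"
    proof -
      have e: "(x + t*r1) - (y + t*r2) / a = x - y / a" for x y t
        using ra apos by (simp add: field_simps)
      show ?thesis unfolding char_sol_def k12_def c_def by (auto simp: e)
    qed
    moreover have "char_sol r1 (- r1) c (\<lambda>_. 0)" "char_sol r1 (- r2) c (\<lambda>_. 0)"
      unfolding char_sol_def c_def by auto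
    moreover have "\<forall>x\<in>{0..1}.
        k11 (x, 0) = C1 * integral {0..x} (\<lambda>y. r1 * c (y, 0) + r2 * c (y, 0) - g y)
      \<and> k12 (x, 0) = C2 * integral {0..x} (\<lambda>y. r1 * c (y, 0) + r2 * c (y, 0) - g y)
      \<and> k12 (x, x) = 0 \<and> c (x, x) = 0 \<and> c (x, x) = 0"
    proof
      fix x :: real assume x: "x \<in> {0..1}"
      have "x - x / a \<le> 0" using x apos alt1 by (auto simp: field_simps intro!: mult_left_le_one_le)
      hence "max 0 (x - x / a) = 0" by simp
      thus "k11 (x, 0) = C1 * integral {0..x} (\<lambda>y. r1 * c (y, 0) + r2 * c (y, 0) - g y)
      \<and> k12 (x, 0) = C2 * integral {0..x} (\<lambda>y. r1 * c (y, 0) + r2 * c (y, 0) - g y)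
      \<and> k12 (x, x) = 0 \<and> c (x, x) = 0 \<and> c (x, x) = 0"
        using Fcong[of c c x] x H0 by (auto simp: k11_def k12_def c_def Tri_def)
    qed
    ultimately show ?thesis by (auto simp: k11_def k12_def c_def)
  qed
  show ?thesis
  proof (rule ex1I[of _ "(k11, k12, c, c)"])
    show "?P (k11, k12, c, c)" by (rule ex)
  next
    fix K assume PK: "?P K"
    obtain k11' k12' c11' c12' where K: "K = (k11', k12', c11', c12')" by (metis prod.exhaust)
    note P = PK[unfolded K prod.case]
    have out: "p \<notin> Tri \<Longrightarrow> k11' p = 0 \<and> k12' p = 0 \<and> c11' p = 0 \<and> c12' p = 0" for p
      using P by blast
    have bd: "\<And>x. x \<in> {0..1} \<Longrightarrow> k11' (x, 0) = C1 * integral {0..x} (\<lambda>y. r1 * c11' (y, 0) + r2 * c12' (y, 0) - g y)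
      \<and> k12' (x, 0) = C2 * integral {0..x} (\<lambda>y. r1 * c11' (y, 0) + r2 * c12' (y, 0) - g y)
      \<and> k12' (x, x) = 0 \<and> c11' (x, x) = 0 \<and> c12' (x, x) = 0"
      using P by blast
    have cs1: "char_sol r1 r1 k11' c11'" and cs2: "char_sol r1 r2 k12' c12'"
      and cs3: "char_sol r1 (- r1) c11' (\<lambda>_. 0)" and cs4: "char_sol r1 (- r2) c12' (\<lambda>_. 0)"
      using P by blast+
    have c11z: "\<forall>p\<in>Tri. c11' p = 0"
    proof
      fix p assume p: "p \<in> Tri"
      obtain x y where pxy: "p = (x,y)" by (cases p)
      note T = TriD[OF p[unfolded pxy]]
      define d where "d = (x+y)/2"
      define t where "t = (x-y)/(2*r1)"
      have "c11' (x, y) = c11' (d, d)"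
        apply (rule char_use0[OF cs3, of d d t])
        using T r1 by (auto simp: Tri_def d_def t_def field_simps)
      also have "\<dots> = 0" using bd[of d] T by (auto simp: d_def)
      finally show "c11' p = 0" by (simp add: pxy)
    qed
    have c12z: "\<forall>p\<in>Tri. c12' p = 0"
    proof
      fix p assume p: "p \<in> Tri"
      obtain x y where pxy: "p = (x,y)" by (cases p)
      note T = TriD[OF p[unfolded pxy]]
      define s where "s = (x-y)/(r1+r2)"
      define d where "d = x - s*r1"
      have s0: "0 \<le> s" using T r1 r2 by (simp add: s_def)
      have dy: "d - y = s * r2" using r1 r2 by (simp add: d_def s_def field_simps)
      have "0 \<le> s*r2" using s0 r2 by simp
      hence dy': "y \<le> d" using dy by linarith
      have dx: "d \<le> x" using s0 r1 by (simp add: d_def)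
      have "c12' (x, y) = c12' (d, d)"
        apply (rule char_use0[OF cs4, of d d s])
        using T dy dy' dx s0 by (auto simp: Tri_def d_def algebra_simps)
      also have "\<dots> = 0" using bd[of d] T dy' dx by auto
      finally show "c12' p = 0" by (simp add: pxy)
    qed
    have c11e: "c11' = c" by (rule ext) (metis c11z out c_def)
    have c12e: "c12' = c" by (rule ext) (metis c12z out c_def)
    have k11e: "k11' = k11"
    proof (rule ext)
      fix p show "k11' p = k11 p"
      proof (cases "p \<in> Tri")
        case False thus ?thesis using out by (simp add: k11_def)
      next
        case True
        obtain x y where pxy: "p = (x,y)" by (cases p)
        note T = TriD[OF True[unfolded pxy]]
        have "k11' (x, y) = k11' (x - y, 0)"
          apply (rule char_use0[OF cs1 c11z, of "x-y" 0 "y/r1"])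
          using T r1 by (auto simp: Tri_def field_simps)
        also have "\<dots> = C1 * H (x - y)" using bd[of "x-y"] Fcong[OF c11z c12z, of "x-y"] T by auto
        finally show ?thesis using True by (simp add: pxy k11_def)
      qed
    qed
    have k12e: "k12' = k12"
    proof (rule ext)
      fix p show "k12' p = k12 p"
      proof (cases "p \<in> Tri")
        case False thus ?thesis using out by (simp add: k12_def)
      next
        case True
        obtain x y where pxy: "p = (x,y)" by (cases p)
        note T = TriD[OF True[unfolded pxy]]
        show ?thesis
        proof (cases "y \<le> a * x")
          case True
          have ya: "y / a \<le> x" using True apos by (simp add: field_simps)
          have ya0: "0 \<le> y / a" using T apos by simp
          have "k12' (x, y) = k12' (x - y/a, 0)"
            apply (rule char_use0[OF cs2 c12z, of "x-y/a" 0 "y/r2"])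
            using T r1 r2 ya ya0 apply (auto simp: Tri_def)[2]
            using ra r2 apos apply (simp add: field_simps)
            using r2 apply simp
            using T ya ya0 by (auto simp: Tri_def)
          also have "\<dots> = C2 * H (x - y/a)" using bd[of "x-y/a"] Fcong[OF c11z c12z, of "x-y/a"] T ya ya0 by auto
          finally show ?thesis using \<open>p \<in> Tri\<close> ya by (simp add: pxy k12_def)
        next
          case False
          define s where "s = (x-y)/(r1-r2)"
          define d where "d = x - s*r1"
          have s0: "0 \<le> s" using T r1 r2 by (simp add: s_def)
          have ne: "r1 - r2 \<noteq> 0" using r2 by simp
          have dx: "d \<le> x" using s0 r1 by (simp add: d_def)
          have dd: "d = (y*r1 - x*r2)/(r1-r2)" using ne by (simp add: d_def s_def field_simps)
          have "a * x < y" using False by simp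
          hence "x * r2 < y * r1" using a r1 by (simp add: field_simps)
          hence d0: "0 \<le> d" using dd r2 by simp
          have sm: "s*(r1-r2) = x - y" using ne by (simp add: s_def)
          have dy: "y = d + s * r2" using sm by (simp add: d_def algebra_simps)
          have "k12' (x, y) = k12' (d, d)"
            apply (rule char_use0[OF cs2 c12z, of d d s])
            using T dy d0 dx s0 by (auto simp: Tri_def d_def algebra_simps)
          also have "\<dots> = 0" using bd[of d] T d0 dx by auto
          also have "x - y / a < 0" using False apos by (simp add: field_simps)
          hence "0 = k12 p" using \<open>p \<in> Tri\<close> H0 by (simp add: k12_def pxy)
          finally show ?thesis by (simp add: pxy)
        qed
      qed
    qed
    show "K = (k11, k12, c, c)" using K c11e c12e k11e k12e by simp
  qed
qed

theorem lemma2: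
  fixes \<epsilon> y0 :: real
    and A :: "real^'n^'n" and B :: "real^'n" and \<Gamma>0 :: "real^'n"
    and \<Gamma>1 \<Gamma>1' :: "real \<Rightarrow> real^'n"
  assumes "\<epsilon> > 0" and "-1 < y0" and "y0 < 0"
    and "\<forall>x\<in>{0..1}. (\<Gamma>1 has_vector_derivative \<Gamma>1' x) (at x within {0..1})"
    and "\<forall>x\<in>{0..1}. (\<Gamma>1' has_vector_derivative ((1 / eps1 \<epsilon> y0) *\<^sub>R (\<Gamma>1 x v* A)))
                        (at x within {0..1})"
    and "\<Gamma>1 0 = \<Gamma>0" and "\<Gamma>1' 0 = 0"
  shows "\<exists>!K. let (k11, k12, c11, c12) = K;
              e1 = eps1 \<epsilon> y0; e2 = eps2 \<epsilon> y0; a = aa y0;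
              F = (\<lambda>x. integral {0..x}
                     (\<lambda>y. sqrt e1 * c11 (y, 0) + sqrt e2 * c12 (y, 0) - \<Gamma>1 y \<bullet> B))
           in (\<forall>p. p \<notin> Tri \<longrightarrow> k11 p = 0 \<and> k12 p = 0 \<and> c11 p = 0 \<and> c12 p = 0)
            \<and> continuous_on Tri k11 \<and> continuous_on Tri k12
            \<and> continuous_on Tri c11 \<and> continuous_on Tri c12
            \<and> char_sol (sqrt e1) (sqrt e1) k11 c11
            \<and> char_sol (sqrt e1) (sqrt e2) k12 c12
            \<and> char_sol (sqrt e1) (- sqrt e1) c11 (\<lambda>_. 0)
            \<and> char_sol (sqrt e1) (- sqrt e2) c12 (\<lambda>_. 0)
            \<and> (\<forall>x\<in>{0..1}.
                 k11 (x, 0) = a * e2 / (e1 * (a * e2 + sqrt (e1 * e2))) * F x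
               \<and> k12 (x, 0) = 1 / (a * e2 + sqrt (e1 * e2)) * F x
               \<and> k12 (x, x) = 0 \<and> c11 (x, x) = 0 \<and> c12 (x, x) = 0)"
proof -
  have p1: "0 < 1 + y0" and p2: "0 < 1 - y0" using assms(2,3) by linarith+
  have s1: "sqrt (eps1 \<epsilon> y0) = sqrt \<epsilon> / (1 + y0)"
    using p1 by (simp add: eps1_def real_sqrt_divide)
  have s2: "sqrt (eps2 \<epsilon> y0) = sqrt \<epsilon> / (1 - y0)"
    using p2 by (simp add: eps2_def real_sqrt_divide)
  have se: "0 < sqrt \<epsilon>" using assms(1) by simp
  have r2: "0 < sqrt (eps2 \<epsilon> y0)" using s2 se p2 by simp
  have r12: "sqrt (eps2 \<epsilon> y0) < sqrt (eps1 \<epsilon> y0)"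
    unfolding s1 s2 using se p1 p2 assms(3) by (simp add: frac_less2)
  have a: "aa y0 = sqrt (eps2 \<epsilon> y0) / sqrt (eps1 \<epsilon> y0)"
    unfolding s1 s2 aa_def using se p1 p2 by (simp add: field_simps)
  have G: "continuous_on {0..1} \<Gamma>1"
    by (rule continuous_on_vector_derivative) (use assms(4) in auto)
  have g: "continuous_on {0..1} (\<lambda>y. \<Gamma>1 y \<bullet> B)"
    by (intro continuous_intros G)
  show ?thesis
    unfolding Let_def
    using core[OF r2 r12 a g, of "aa y0 * eps2 \<epsilon> y0 / (eps1 \<epsilon> y0 * (aa y0 * eps2 \<epsilon> y0 + sqrt (eps1 \<epsilon> y0 * eps2 \<epsilon> y0)))"
       "1 / (aa y0 * eps2 \<epsilon> y0 + sqrt (eps1 \<epsilon> y0 * eps2 \<epsilon> y0))"]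
    by simp
qed

end
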